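(* Let $n\ge2$, $F_1,\dots,F_n:\mathbb{R}^d\to\mathbb{R}^d$, $F=\frac1n\sum_iF_i$, with $F$ $\mu$-strongly monotone ($\mu>0$) and each $F_i$ $L_i$-Lipschitz; let $z_*$ be the solution of $F(z_* )=0$, $L_{max}=\max_iL_i$, $\sigma_*^2=\frac1n\sum_i\|F_i(z_* )\|^2$. Consider the iterates $z_0^k$ of IEG (defined in the context) started at $z_0$. 1. If $\gamma_2=2\gamma_1$ and $\gamma_1\le\frac{\mu}{10L_{max}^2\sqrt{10n^2+n+29}}$, then $$\|z_0^k-z_*\|^2\le\Big(1-\frac{\gamma_1n\mu}{4}\Big)^k\|z_0-z_*\|^2+\frac{48L_{max}^2}{\mu^2}\big[6n(n-1)\gamma_1^2+\gamma_2^2\big]\sigma_*^2.$$ 2. If IEG is run for $K$ epochs with $\gamma_2=2\gamma_1$ and $\gamma_1=\min\Big\{\frac{\mu}{10L_{max}^2\sqrt{10n^2+2n+29}},\frac{4\log(n^{1/2}K)}{\mu nK}\Big\}$, then $$\|z_0^K-z_*\|^2=\tilde{\mathcal{O}}\Big(e^{-\frac{K\mu^2}{L_{max}^2}}+\frac1{K^2}\Big).$$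
   Context: $\mu$-strongly monotone: $\langle F(z_1)-F(z_2),z_1-z_2\rangle\ge\mu\|z_1-z_2\|^2$. IEG (incremental extragradient) with step sizes $\gamma_1,\gamma_2>0$: set $z_0^0=z_0$; for each epoch $k=0,1,\dots$ and $i=0,\dots,n-1$ set $\bar z_i^k=z_i^k-\gamma_2F_{i+1}(z_i^k)$, $z_{i+1}^k=z_i^k-\gamma_1F_{i+1}(\bar z_i^k)$ (fixed original order every epoch); then $z_0^{k+1}=z_n^k$. $\tilde{\mathcal{O}}$ suppresses constant and logarithmic factors. *)

theory Defs
  imports "HOL-Analysis.Analysis"
begin

text \<open>Operators F_1..F_n are indexed by 1..n: F i for i in {1..n}.\<close>

definition strongly_monotone :: "real \<Rightarrow> ('a::real_inner \<Rightarrow> 'a) \<Rightarrow> bool" where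
  "strongly_monotone \<mu> G \<longleftrightarrow>
     (\<forall>z1 z2. inner (G z1 - G z2) (z1 - z2) \<ge> \<mu> * (norm (z1 - z2))\<^sup>2)"

definition avg_op :: "nat \<Rightarrow> (nat \<Rightarrow> 'a::real_vector \<Rightarrow> 'a) \<Rightarrow> 'a \<Rightarrow> 'a" where
  "avg_op n F z = (1 / real n) *\<^sub>R (\<Sum>i=1..n. F i z)"

definition ieg_step :: "(nat \<Rightarrow> 'a::real_vector \<Rightarrow> 'a) \<Rightarrow> real \<Rightarrow> real \<Rightarrow> nat \<Rightarrow> 'a \<Rightarrow> 'a" where
  "ieg_step F \<gamma>1 \<gamma>2 i z = (let zbar = z - \<gamma>2 *\<^sub>R F (i+1) z in z - \<gamma>1 *\<^sub>R F (i+1) zbar)"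

text \<open>One epoch: z_0^k \<mapsto> z_n^k = z_0^{k+1}, fixed order 0,...,n-1.\<close>
definition ieg_epoch :: "nat \<Rightarrow> (nat \<Rightarrow> 'a::real_vector \<Rightarrow> 'a) \<Rightarrow> real \<Rightarrow> real \<Rightarrow> 'a \<Rightarrow> 'a" where
  "ieg_epoch n F \<gamma>1 \<gamma>2 z = fold (ieg_step F \<gamma>1 \<gamma>2) [0..<n] z"

definition ieg :: "nat \<Rightarrow> (nat \<Rightarrow> 'a::real_vector \<Rightarrow> 'a) \<Rightarrow> real \<Rightarrow> real \<Rightarrow> 'a \<Rightarrow> nat \<Rightarrow> 'a" where
  "ieg n F \<gamma>1 \<gamma>2 z0 k = (ieg_epoch n F \<gamma>1 \<gamma>2 ^^ k) z0"

end

theory Submission imports Defs begin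

lemma norm_diff_scale_sq:
  fixes w y :: "'a::real_inner"
  shows "(norm (w - c *\<^sub>R y))\<^sup>2 = (norm w)\<^sup>2 - 2*c*inner w y + c\<^sup>2*(norm y)\<^sup>2"
  unfolding power2_norm_eq_inner
  by (simp add: inner_diff_left inner_diff_right inner_commute algebra_simps power2_eq_square)

lemma sq_sum_le: "((x::real) + y)\<^sup>2 \<le> 2*x\<^sup>2 + 2*y\<^sup>2"
proof -
  have "0 \<le> (x - y)\<^sup>2" by simp
  then show ?thesis by (simp add: power2_eq_square algebra_simps)
qed

lemma epoch_bound:
  fixes F :: "nat \<Rightarrow> 'a::real_inner \<Rightarrow> 'a" and z zs :: 'a
  assumes n2: "n \<ge> 2" and mu: "\<mu> > 0" and gam: "\<gamma> \<ge> 0" and Lmu: "\<mu> \<le> L"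
    and step: "30 * \<gamma> * real n * L\<^sup>2 \<le> \<mu>"
    and lipF: "\<And>i x y. i \<in> {1..n} \<Longrightarrow> norm (F i x - F i y) \<le> L * norm (x - y)"
    and mon: "\<mu> * (norm (z - zs))\<^sup>2 \<le> inner (avg_op n F z) (z - zs)"
    and avgl: "norm (avg_op n F z) \<le> L * norm (z - zs)"
  shows "(norm (ieg_epoch n F \<gamma> (2*\<gamma>) z - zs))\<^sup>2 \<le> (1 - \<gamma>*real n*\<mu>/2) * (norm (z - zs))\<^sup>2
          + 54 * \<gamma>^3 * (real n)\<^sup>2 * L\<^sup>2 * (\<Sum>j<n. (norm (F (Suc j) zs))\<^sup>2) / \<mu>"
proof -
  define st where "st = ieg_step F \<gamma> (2*\<gamma>)"
  define zi where "zi i = fold st [0..<i] z" for i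
  define zb where "zb i = zi i - (2*\<gamma>) *\<^sub>R F (Suc i) (zi i)" for i
  have zi_Suc: "zi (Suc i) = zi i - \<gamma> *\<^sub>R F (Suc i) (zb i)" for i
    by (simp add: zi_def zb_def st_def ieg_step_def Let_def)
  have zi_sum: "zi i = z - \<gamma> *\<^sub>R (\<Sum>j<i. F (Suc j) (zb j))" for i
    by (induction i) (simp_all add: zi_Suc zi_def[of 0] algebra_simps scaleR_add_right)
  have L0: "L > 0" using mu Lmu by linarith
  have nr: "real n \<ge> 2" using n2 by simp
  define R where "R = norm (z - zs)"
  define A where "A = L * R"
  define g where "g j = F j zs" for j
  define G where "G = (\<Sum>j<n. norm (g (Suc j)))"
  define S where "S = (\<Sum>j<n. (norm (g (Suc j)))\<^sup>2)"
  define X where "X = real n * A + G"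
  define P where "P = 2*\<gamma>*X"
  define Q where "Q = P + 2*\<gamma>*(L*P + A + G)"
  have R0: "R \<ge> 0" by (simp add: R_def)
  have A0: "A \<ge> 0" using L0 R0 by (simp add: A_def)
  have G0: "G \<ge> 0" by (simp add: G_def sum_nonneg)
  have X0: "X \<ge> 0" using A0 G0 by (simp add: X_def)
  have P0: "P \<ge> 0" using X0 gam by (simp add: P_def)
  have gnL: "30 * \<gamma> * real n * L \<le> 1"
  proof -
    have "30 * \<gamma> * real n * L * L \<le> 1 * L" using step Lmu by (simp add: power2_eq_square mult.assoc)
    then show ?thesis using L0 by (simp add: mult_le_cancel_right)
  qed
  have gL: "\<gamma> * L \<le> 1/60"
  proof -
    have "\<gamma> * L * 2 \<le> \<gamma> * L * real n" using nr gam L0 by (intro mult_left_mono) auto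
    then show ?thesis using gnL by (simp add: algebra_simps)
  qed
  have gle: "norm (g (Suc j)) \<le> G" if "j < n" for j
    unfolding G_def using that by (intro member_le_sum) auto
  have Fb: "norm (F (Suc j) y) \<le> L * norm (y - z) + A + norm (g (Suc j))" if "j < n" for j y
  proof -
    have "norm (F (Suc j) y) \<le> norm (F (Suc j) y - F (Suc j) zs) + norm (g (Suc j))"
      unfolding g_def using norm_triangle_ineq2[of "F (Suc j) y" "F (Suc j) zs"] by simp
    also have "norm (F (Suc j) y - F (Suc j) zs) \<le> L * norm (y - zs)"
      using lipF[of "Suc j"] that by auto
    also have "L * norm (y - zs) \<le> L * (norm (y - z) + R)"
      using L0 unfolding R_def by (intro mult_left_mono) (auto intro: norm_diff_triangle_le)
    finally show ?thesis by (simp add: A_def algebra_simps)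
  qed
  have QX: "Q \<le> 5*\<gamma>*X"
  proof -
    have "1 * A \<le> real n * A" using nr A0 by (intro mult_right_mono) auto
    then have AG: "A + G \<le> X" unfolding X_def by simp
    have "Q = 2*\<gamma>*X*(1 + 2*(\<gamma>*L)) + 2*\<gamma>*(A+G)" by (simp add: Q_def P_def algebra_simps)
    also have "\<dots> \<le> 2*\<gamma>*X*(1 + 2*(1/60)) + 2*\<gamma>*X"
      using gam X0 gL AG by (intro add_mono mult_left_mono) auto
    also have "\<dots> \<le> 5*\<gamma>*X" using gam X0 by (simp add: algebra_simps mult_nonneg_nonneg)
    finally show ?thesis .
  qed
  have nLQ: "real n * L * Q \<le> X"
  proof -
    have "real n * L * Q \<le> real n * L * (5*\<gamma>*X)" using QX L0 by (intro mult_left_mono) auto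
    also have "\<dots> = (\<gamma> * real n * L) * 5 * X" by simp
    also have "\<dots> \<le> (1/30) * 5 * X" using gnL X0 by (intro mult_right_mono) auto
    also have "\<dots> \<le> X" using X0 by simp
    finally show ?thesis .
  qed
  define B where "B i = \<gamma> * (real i * (L*Q + A) + (\<Sum>j<i. norm (g (Suc j))))" for i
  have BP: "B i \<le> P" if "i \<le> n" for i
  proof -
    have Q0: "Q \<ge> 0" using P0 gam L0 A0 G0 by (simp add: Q_def)
    have s: "(\<Sum>j<i. norm (g (Suc j))) \<le> G" unfolding G_def using that
      by (intro sum_mono2) auto
    have "real i * (L*Q + A) \<le> real n * (L*Q + A)" using that Q0 L0 A0
      by (intro mult_right_mono) auto
    then have "B i \<le> \<gamma> * (real n * (L*Q+A) + G)" unfolding B_def using s gam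
      by (intro mult_left_mono) auto
    also have "\<dots> \<le> \<gamma> * (2*X)" using nLQ gam unfolding X_def
      by (intro mult_left_mono) (auto simp: algebra_simps)
    finally show ?thesis by (simp add: P_def)
  qed
  have qstep: "norm (zb i - z) \<le> Q" if "i < n" "norm (zi i - z) \<le> P" for i
  proof -
    have "norm (zb i - z) \<le> norm (zi i - z) + 2*\<gamma> * norm (F (Suc i) (zi i))"
    proof -
      have "norm (zb i - z) = norm ((zi i - z) - (2*\<gamma>) *\<^sub>R F (Suc i) (zi i))" by (simp add: zb_def algebra_simps)
      also have "\<dots> \<le> norm (zi i - z) + norm ((2*\<gamma>) *\<^sub>R F (Suc i) (zi i))" by (rule norm_triangle_ineq4)
      also have "\<dots> = norm (zi i - z) + 2*\<gamma> * norm (F (Suc i) (zi i))" using gam by simp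
      finally show ?thesis .
    qed
    also have "\<dots> \<le> P + 2*\<gamma>*(L*P + A + G)"
    proof -
      have "norm (F (Suc i) (zi i)) \<le> L*P + A + G"
      proof -
        have "L * norm (zi i - z) \<le> L * P" using that(2) L0 by (intro mult_left_mono) auto
        then show ?thesis using Fb[OF that(1), of "zi i"] gle[OF that(1)] by linarith
      qed
      then have "2*\<gamma> * norm (F (Suc i) (zi i)) \<le> 2*\<gamma> * (L*P + A + G)"
        using gam by (intro mult_left_mono) auto
      then show ?thesis using that(2) by linarith
    qed
    finally show ?thesis by (simp add: Q_def)
  qed
  have inv: "i \<le> n \<Longrightarrow> norm (zi i - z) \<le> B i" for i
  proof (induction i)
    case 0 then show ?case by (simp add: zi_def B_def)
  next
    case (Suc i)
    then have i: "i < n" by simp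
    have IH: "norm (zi i - z) \<le> B i" using Suc by simp
    have q: "norm (zb i - z) \<le> Q" using qstep[OF i] IH BP[of i] i by simp
    have "norm (zi (Suc i) - z) \<le> norm (zi i - z) + \<gamma> * norm (F (Suc i) (zb i))"
    proof -
      have "norm (zi (Suc i) - z) = norm ((zi i - z) - \<gamma> *\<^sub>R F (Suc i) (zb i))" by (simp add: zi_Suc algebra_simps)
      also have "\<dots> \<le> norm (zi i - z) + norm (\<gamma> *\<^sub>R F (Suc i) (zb i))" by (rule norm_triangle_ineq4)
      also have "\<dots> = norm (zi i - z) + \<gamma> * norm (F (Suc i) (zb i))" using gam by simp
      finally show ?thesis .
    qed
    also have "\<dots> \<le> B i + \<gamma> * (L*Q + A + norm (g (Suc i)))"
    proof -
      have "norm (F (Suc i) (zb i)) \<le> L*Q + A + norm (g (Suc i))"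
      proof -
        have "L * norm (zb i - z) \<le> L * Q" using q L0 by (intro mult_left_mono) auto
        then show ?thesis using Fb[OF i, of "zb i"] by linarith
      qed
      then have "\<gamma> * norm (F (Suc i) (zb i)) \<le> \<gamma> * (L*Q + A + norm (g (Suc i)))"
        using gam by (intro mult_left_mono) auto
      then show ?thesis using IH by linarith
    qed
    also have "\<dots> = B (Suc i)" by (simp add: B_def algebra_simps)
    finally show ?case .
  qed
  have qb: "norm (zb i - z) \<le> Q" if "i < n" for i
    using qstep[OF that] inv[of i] BP[of i] that by simp
  define e where "e = (\<Sum>i<n. F (Suc i) (zb i) - F (Suc i) z)"
  have eb: "norm e \<le> 5*\<gamma>*real n*L*X"
  proof -
    have "norm e \<le> (\<Sum>i<n. norm (F (Suc i) (zb i) - F (Suc i) z))"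
      unfolding e_def by (rule norm_sum)
    also have "\<dots> \<le> (\<Sum>i<n. L * Q)"
    proof (rule sum_mono)
      fix i assume "i \<in> {..<n}"
      then have i: "i < n" by simp
      have "norm (F (Suc i) (zb i) - F (Suc i) z) \<le> L * norm (zb i - z)" using lipF[of "Suc i"] i by auto
      also have "\<dots> \<le> L * Q" using qb[OF i] L0 by (intro mult_left_mono) auto
      finally show "norm (F (Suc i) (zb i) - F (Suc i) z) \<le> L * Q" .
    qed
    also have "\<dots> = real n * L * Q" by simp
    also have "\<dots> \<le> real n * L * (5*\<gamma>*X)" using QX L0 by (intro mult_left_mono) auto
    finally show ?thesis by (simp add: algebra_simps)
  qed
  define v where "v = avg_op n F z"
  have sumF: "(\<Sum>i<n. F (Suc i) z) = real n *\<^sub>R v"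
  proof -
    have "(\<Sum>i<n. F (Suc i) z) = (\<Sum>i=1..n. F i z)" by (rule sum_bounds_lt_plus1)
    then show ?thesis using n2 by (simp add: v_def avg_op_def)
  qed
  have ep: "ieg_epoch n F \<gamma> (2*\<gamma>) z = zi n"
    by (simp add: ieg_epoch_def zi_def st_def)
  have zn: "zi n - zs = (z - zs) - \<gamma> *\<^sub>R (real n *\<^sub>R v + e)"
    unfolding zi_sum e_def sum_subtractf sumF[symmetric] by (simp add: algebra_simps)
  define w where "w = z - zs"
  define E where "E = norm e"
  define a where "a = \<gamma> * real n * \<mu>"
  define c0 where "c0 = \<gamma> / (real n * \<mu>)"
  define K3 where "K3 = \<gamma>^3 * (real n)\<^sup>2 * L\<^sup>2 * S / \<mu>"
  define M where "M = \<gamma>^3 * (real n)^3 * L^4 / \<mu>"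
  have nmu: "real n * \<mu> > 0" using mu nr by simp
  have E0: "E \<ge> 0" by (simp add: E_def)
  have Rw: "norm w = R" by (simp add: w_def R_def)
  have vL: "norm v \<le> L * R" using avgl by (simp add: v_def R_def)
  have v2: "(norm v)\<^sup>2 \<le> L\<^sup>2 * R\<^sup>2"
  proof -
    have "(norm v)\<^sup>2 \<le> (L*R)\<^sup>2" using vL by (intro power_mono) auto
    then show ?thesis by (simp add: power_mult_distrib)
  qed
  have wv: "inner w v \<ge> \<mu> * R\<^sup>2" using mon by (simp add: w_def v_def R_def inner_commute)
  have we: "inner w e \<ge> - (R * E)"
    using norm_cauchy_schwarz[of "-w" e] by (simp add: Rw E_def)
  have ne2: "(norm (real n *\<^sub>R v + e))\<^sup>2 \<le> 2*(real n)\<^sup>2*L\<^sup>2*R\<^sup>2 + 2*E\<^sup>2"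
  proof -
    have "norm (real n *\<^sub>R v + e) \<le> real n * norm v + E"
      using norm_triangle_ineq[of "real n *\<^sub>R v" e] by (simp add: E_def)
    then have "(norm (real n *\<^sub>R v + e))\<^sup>2 \<le> (real n * norm v + E)\<^sup>2" by (intro power_mono) auto
    also have "\<dots> \<le> 2*(real n * norm v)\<^sup>2 + 2*E\<^sup>2"
      by (rule sq_sum_le)
    also have "(real n * norm v)\<^sup>2 = (real n)\<^sup>2 * (norm v)\<^sup>2" by (simp add: power_mult_distrib)
    also have "2*((real n)\<^sup>2 * (norm v)\<^sup>2) \<le> 2*((real n)\<^sup>2 * (L\<^sup>2 * R\<^sup>2))"
      using v2 by (intro mult_left_mono) auto
    finally show ?thesis by (simp add: algebra_simps)
  qed
  have r1: "(norm (zi n - zs))\<^sup>2 \<le> R\<^sup>2 - 2*a*R\<^sup>2 + \<gamma>*(2*R*E) + \<gamma>\<^sup>2*(2*(real n)\<^sup>2*L\<^sup>2*R\<^sup>2) + 2*\<gamma>\<^sup>2*E\<^sup>2"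
  proof -
    have "(norm (zi n - zs))\<^sup>2 = R\<^sup>2 - 2*\<gamma>*(real n * inner w v + inner w e) + \<gamma>\<^sup>2*(norm (real n *\<^sub>R v + e))\<^sup>2"
      unfolding zn norm_diff_scale_sq by (simp add: w_def[symmetric] Rw inner_add_right)
    also have "\<gamma>\<^sup>2*(norm (real n *\<^sub>R v + e))\<^sup>2 \<le> \<gamma>\<^sup>2*(2*(real n)\<^sup>2*L\<^sup>2*R\<^sup>2 + 2*E\<^sup>2)"
      using ne2 by (intro mult_left_mono) auto
    also have "- 2*\<gamma>*(real n * inner w v + inner w e) \<le> -2*\<gamma>*(real n * (\<mu> * R\<^sup>2) - R*E)"
    proof -
      have "real n * (\<mu> * R\<^sup>2) \<le> real n * inner w v" using wv by (intro mult_left_mono) auto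
      then have "real n * (\<mu> * R\<^sup>2) - R*E \<le> real n * inner w v + inner w e" using we by linarith
      then show ?thesis using gam by (intro mult_left_mono_neg) auto
    qed
    ultimately show ?thesis by (simp add: a_def algebra_simps)
  qed
  have r2: "\<gamma>*(2*R*E) \<le> a*R\<^sup>2 + c0*E\<^sup>2"
  proof -
    have "0 \<le> (real n * \<mu> * R - E)\<^sup>2" by simp
    then have "2*(real n*\<mu>)*(R*E) \<le> (real n*\<mu>)\<^sup>2*R\<^sup>2 + E\<^sup>2" by (simp add: power2_eq_square algebra_simps)
    then have "(2*(real n*\<mu>)*(R*E))/(real n*\<mu>) \<le> ((real n*\<mu>)\<^sup>2*R\<^sup>2 + E\<^sup>2)/(real n*\<mu>)"
      using nmu by (intro divide_right_mono) auto
    moreover have "(2*(real n*\<mu>)*(R*E))/(real n*\<mu>) = 2*(R*E)" using nmu mu n2 by simp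
    moreover have "((real n*\<mu>)\<^sup>2*R\<^sup>2 + E\<^sup>2)/(real n*\<mu>) = (real n*\<mu>)*R\<^sup>2 + E\<^sup>2/(real n*\<mu>)"
      using nmu by (simp add: add_divide_distrib power2_eq_square)
    ultimately have "2*(R*E) \<le> (real n*\<mu>)*R\<^sup>2 + E\<^sup>2/(real n*\<mu>)" by simp
    then have "\<gamma>*(2*(R*E)) \<le> \<gamma>*((real n*\<mu>)*R\<^sup>2 + E\<^sup>2/(real n*\<mu>))" using gam by (intro mult_left_mono) auto
    then show ?thesis by (simp add: a_def c0_def algebra_simps)
  qed
  have tL: "\<gamma> * real n * L\<^sup>2 \<le> \<mu> / 30" using step by simp
  have r3: "\<gamma>\<^sup>2*(2*(real n)\<^sup>2*L\<^sup>2*R\<^sup>2) \<le> (a/15)*R\<^sup>2"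
  proof -
    have "(2*\<gamma>*real n)*(\<gamma> * real n * L\<^sup>2) \<le> (2*\<gamma>*real n)*(\<mu>/30)" using tL gam by (intro mult_left_mono) auto
    then have "(2*\<gamma>*real n)*(\<gamma> * real n * L\<^sup>2) * R\<^sup>2 \<le> (2*\<gamma>*real n)*(\<mu>/30) * R\<^sup>2" by (intro mult_right_mono) auto
    then show ?thesis by (simp add: a_def power2_eq_square algebra_simps)
  qed
  have r4: "2*\<gamma>\<^sup>2*E\<^sup>2 \<le> (1/15)*c0*E\<^sup>2"
  proof -
    have "\<gamma> * real n * \<mu> \<le> \<gamma> * real n * L" using Lmu gam by (intro mult_left_mono) auto
    then have a30: "30 * (\<gamma> * real n * \<mu>) \<le> 1" using gnL by linarith
    have "2*\<gamma>\<^sup>2 \<le> (1/15)*c0"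
    proof -
      have "2*\<gamma>\<^sup>2 * (real n * \<mu>) = (2/30)*\<gamma>*(30*(\<gamma> * real n * \<mu>))" by (simp add: power2_eq_square algebra_simps)
      also have "\<dots> \<le> (2/30)*\<gamma>*1" using a30 gam by (intro mult_left_mono) auto
      also have "\<dots> = (1/15)*c0 * (real n * \<mu>)" using nmu mu n2 by (simp add: c0_def)
      finally show ?thesis using nmu by (rule mult_right_le_imp_le)
    qed
    then show ?thesis by (intro mult_right_mono) auto
  qed
  have Gsq: "G\<^sup>2 \<le> real n * S"
    using sum_squared_le_sum_of_squares[of "\<lambda>j. norm (g (Suc j))" "{..<n}"] by (simp add: G_def S_def mult.commute)
  have X2: "X\<^sup>2 \<le> 2*(real n)\<^sup>2*L\<^sup>2*R\<^sup>2 + 2*real n*S"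
  proof -
    have "X\<^sup>2 \<le> 2*(real n * A)\<^sup>2 + 2*G\<^sup>2" using sq_sum_le[of "real n * A" G] by (simp add: X_def)
    then show ?thesis using Gsq by (simp add: A_def power_mult_distrib)
  qed
  have E2: "E\<^sup>2 \<le> 25*\<gamma>\<^sup>2*(real n)\<^sup>2*L\<^sup>2 * X\<^sup>2"
  proof -
    have "E\<^sup>2 \<le> (5*\<gamma>*real n*L*X)\<^sup>2" using eb E0 by (intro power_mono) (auto simp: E_def)
    then show ?thesis by (simp add: power_mult_distrib)
  qed
  have r5: "c0*E\<^sup>2 \<le> 50*M*R\<^sup>2 + 50*K3"
  proof -
    have c00: "c0 \<ge> 0" using gam nmu by (simp add: c0_def)
    have "c0*E\<^sup>2 \<le> c0*(25*\<gamma>\<^sup>2*(real n)\<^sup>2*L\<^sup>2 * (2*(real n)\<^sup>2*L\<^sup>2*R\<^sup>2 + 2*real n*S))"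
    proof -
      have "25*\<gamma>\<^sup>2*(real n)\<^sup>2*L\<^sup>2 * X\<^sup>2 \<le> 25*\<gamma>\<^sup>2*(real n)\<^sup>2*L\<^sup>2 * (2*(real n)\<^sup>2*L\<^sup>2*R\<^sup>2 + 2*real n*S)"
        using X2 by (intro mult_left_mono) auto
      then show ?thesis using E2 c00 by (meson mult_left_mono order_trans)
    qed
    also have "\<dots> = 50*M*R\<^sup>2 + 50*K3" using nr mu
      by (simp add: c0_def M_def K3_def field_simps power2_eq_square power3_eq_cube eval_nat_numeral)
    finally show ?thesis .
  qed
  have r6: "M*R\<^sup>2 \<le> (a/900)*R\<^sup>2"
  proof -
    have "M = \<gamma>*real n*(\<gamma> * real n * L\<^sup>2)\<^sup>2/\<mu>" by (simp add: M_def power2_eq_square power3_eq_cube eval_nat_numeral)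
    also have "\<dots> \<le> \<gamma>*real n*(\<mu>/30)\<^sup>2/\<mu>"
      using tL gam mu by (intro divide_right_mono mult_left_mono power_mono) auto
    also have "\<dots> = a/900" using mu by (simp add: a_def power2_eq_square)
    finally show ?thesis by (intro mult_right_mono) auto
  qed
  have fin: "(1 - \<gamma>*real n*\<mu>/2) * R\<^sup>2 + 54 * \<gamma>^3 * (real n)\<^sup>2 * L\<^sup>2 * S / \<mu> = R\<^sup>2 - (a/2)*R\<^sup>2 + 54*K3"
    by (simp add: a_def K3_def algebra_simps)
  have K30: "K3 \<ge> 0" using gam mu by (simp add: K3_def S_def sum_nonneg)
  have a0: "a*R\<^sup>2 \<ge> 0" using gam mu by (simp add: a_def)
  have "(norm (zi n - zs))\<^sup>2 \<le> R\<^sup>2 - (a/2)*R\<^sup>2 + 54*K3"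
    using r1 r2 r3 r4 r5 r6 K30 a0 by (simp add: algebra_simps)
  then have "(norm (zi n - zs))\<^sup>2 \<le> (1 - \<gamma>*real n*\<mu>/2) * R\<^sup>2 + 54 * \<gamma>^3 * (real n)\<^sup>2 * L\<^sup>2 * S / \<mu>"
    unfolding fin by (simp add: R_def)
  then show ?thesis unfolding ep R_def S_def g_def .
qed

lemma iterate_bound:
  fixes r :: "nat \<Rightarrow> real"
  assumes rec: "\<And>k. r (Suc k) \<le> \<rho> * r k + D" and r0: "0 \<le> \<rho>" and r1: "\<rho> < 1" and D0: "D \<ge> 0"
  shows "r k \<le> \<rho>^k * r 0 + D / (1 - \<rho>)"
proof (induction k)
  case 0
  show ?case using D0 r1 by simp
next
  case (Suc k)
  have "r (Suc k) \<le> \<rho> * (\<rho>^k * r 0 + D / (1 - \<rho>)) + D"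
    using rec[of k] Suc mult_left_mono[OF Suc r0] by linarith
  also have "\<dots> = \<rho>^Suc k * r 0 + D / (1 - \<rho>)" using r1 by (simp add: field_simps)
  finally show ?case .
qed

theorem corollary2:
  fixes n :: nat and F :: "nat \<Rightarrow> 'a::euclidean_space \<Rightarrow> 'a"
    and L :: "nat \<Rightarrow> real" and \<mu> :: real and zs z0 :: 'a
  assumes n2: "n \<ge> 2"
    and mu_pos: "\<mu> > 0"
    and smon: "strongly_monotone \<mu> (avg_op n F)"
    and lip: "\<forall>i\<in>{1..n}. lipschitz_on (L i) UNIV (F i)"
    and sol: "avg_op n F zs = 0"
  defines "Lmax \<equiv> Max (L ` {1..n})"
    and "\<sigma>2 \<equiv> (1 / real n) * (\<Sum>i=1..n. (norm (F i zs))\<^sup>2)"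
  shows
    "(\<forall>\<gamma>1 \<gamma>2. \<gamma>1 > 0 \<and> \<gamma>2 = 2 * \<gamma>1 \<and>
         \<gamma>1 \<le> \<mu> / (10 * Lmax\<^sup>2 * sqrt (10 * (real n)\<^sup>2 + real n + 29)) \<longrightarrow>
       (\<forall>k. (norm (ieg n F \<gamma>1 \<gamma>2 z0 k - zs))\<^sup>2 \<le>
              (1 - \<gamma>1 * real n * \<mu> / 4) ^ k * (norm (z0 - zs))\<^sup>2
              + 48 * Lmax\<^sup>2 / \<mu>\<^sup>2 * (6 * real n * (real n - 1) * \<gamma>1\<^sup>2 + \<gamma>2\<^sup>2) * \<sigma>2))
     \<and>
     (\<exists>C (p::nat). \<forall>K::nat. K \<ge> 1 \<longrightarrow>
       (let \<gamma>1 = min (\<mu> / (10 * Lmax\<^sup>2 * sqrt (10 * (real n)\<^sup>2 + 2 * real n + 29)))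
                       (4 * ln (sqrt (real n) * real K) / (\<mu> * real n * real K))
        in (norm (ieg n F \<gamma>1 (2 * \<gamma>1) z0 K - zs))\<^sup>2
           \<le> C * (1 + ln (real K)) ^ p * (exp (- real K * \<mu>\<^sup>2 / Lmax\<^sup>2) + 1 / (real K)\<^sup>2)))"
proof -
  have nr: "real n \<ge> 2" using n2 by simp
  have fin: "finite (L ` {1..n})" by simp
  have ne: "L ` {1..n} \<noteq> {}" using n2 by auto
  have Lle: "L i \<le> Lmax" if "i \<in> {1..n}" for i
    unfolding Lmax_def using fin that by (intro Max_ge) auto
  have lipF: "norm (F i x - F i y) \<le> Lmax * norm (x - y)" if "i \<in> {1..n}" for i x y
  proof -
    have l: "lipschitz_on (L i) UNIV (F i)" using lip that by auto
    have "norm (F i x - F i y) \<le> L i * norm (x - y)"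
      using lipschitz_onD[OF l, of x y] by (simp add: dist_norm)
    also have "\<dots> \<le> Lmax * norm (x - y)" using Lle[OF that] by (intro mult_right_mono) auto
    finally show ?thesis .
  qed
  have avgL: "norm (avg_op n F x - avg_op n F y) \<le> Lmax * norm (x - y)" for x y
  proof -
    have "avg_op n F x - avg_op n F y = (1 / real n) *\<^sub>R (\<Sum>i=1..n. F i x - F i y)"
      by (simp add: avg_op_def sum_subtractf scaleR_diff_right)
    then have "norm (avg_op n F x - avg_op n F y) = (1 / real n) * norm (\<Sum>i=1..n. F i x - F i y)"
      by simp
    also have "\<dots> \<le> (1 / real n) * (\<Sum>i=1..n. Lmax * norm (x - y))"
      using nr by (intro mult_left_mono order_trans[OF norm_sum] sum_mono lipF) auto
    also have "\<dots> = Lmax * norm (x - y)" using nr by simp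
    finally show ?thesis .
  qed
  have mon: "\<mu> * (norm (z - zs))\<^sup>2 \<le> inner (avg_op n F z) (z - zs)" for z
    using smon sol unfolding strongly_monotone_def by (metis diff_zero)
  have avgl: "norm (avg_op n F z) \<le> Lmax * norm (z - zs)" for z
    using avgL[of z zs] sol by simp
  have Lmu: "\<mu> \<le> Lmax"
  proof -
    obtain b :: 'a where b: "b \<in> Basis" using nonempty_Basis by blast
    have nb: "norm b = 1" using b by simp
    have "\<mu> * (norm b)\<^sup>2 \<le> inner (avg_op n F (zs + b)) b" using mon[of "zs + b"] by simp
    also have "\<dots> \<le> norm (avg_op n F (zs + b)) * norm b" by (rule norm_cauchy_schwarz)
    also have "\<dots> \<le> Lmax * norm b" using avgl[of "zs + b"] nb by simp
    finally show ?thesis using nb by simp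
  qed
  have L0: "Lmax > 0" using Lmu mu_pos by linarith
  define S where "S = (\<Sum>j<n. (norm (F (Suc j) zs))\<^sup>2)"
  have S0: "S \<ge> 0" by (simp add: S_def sum_nonneg)
  have Ssig: "S = real n * \<sigma>2"
  proof -
    have "S = (\<Sum>i=1..n. (norm (F i zs))\<^sup>2)" unfolding S_def by (rule sum_bounds_lt_plus1)
    then show ?thesis using nr by (simp add: \<sigma>2_def)
  qed
  have sig0: "\<sigma>2 \<ge> 0" by (simp add: \<sigma>2_def sum_nonneg)
  have gen: "(norm (ieg n F \<gamma> (2*\<gamma>) z0 k - zs))\<^sup>2 \<le> (1 - \<gamma>*real n*\<mu>/2)^k * (norm (z0 - zs))\<^sup>2
      + 108 * \<gamma>\<^sup>2 * real n * Lmax\<^sup>2 * S / \<mu>\<^sup>2"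
    if g0: "\<gamma> > 0" and gs: "30 * \<gamma> * real n * Lmax\<^sup>2 \<le> \<mu>" for \<gamma> k
  proof -
    define r where "r k = (norm (ieg n F \<gamma> (2*\<gamma>) z0 k - zs))\<^sup>2" for k
    define D where "D = 54 * \<gamma>^3 * (real n)\<^sup>2 * Lmax\<^sup>2 * S / \<mu>"
    have rec: "r (Suc k) \<le> (1 - \<gamma>*real n*\<mu>/2) * r k + D" for k
    proof -
      have ep: "r (Suc k) = (norm (ieg_epoch n F \<gamma> (2*\<gamma>) (ieg n F \<gamma> (2*\<gamma>) z0 k) - zs))\<^sup>2"
        unfolding r_def ieg_def by simp
      have "(norm (ieg_epoch n F \<gamma> (2*\<gamma>) (ieg n F \<gamma> (2*\<gamma>) z0 k) - zs))\<^sup>2 \<le>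
          (1 - \<gamma>*real n*\<mu>/2) * (norm (ieg n F \<gamma> (2*\<gamma>) z0 k - zs))\<^sup>2
          + 54 * \<gamma>^3 * (real n)\<^sup>2 * Lmax\<^sup>2 * (\<Sum>j<n. (norm (F (Suc j) zs))\<^sup>2) / \<mu>"
        by (rule epoch_bound[OF n2 mu_pos less_imp_le[OF g0] Lmu gs lipF mon avgl])
      then show ?thesis unfolding ep r_def[of k] D_def S_def .
    qed
    have pos: "\<gamma>*real n*\<mu> > 0" using g0 nr mu_pos by simp
    have gnm: "\<gamma>*real n*\<mu> \<le> 1"
    proof -
      have "30 * \<gamma> * real n * Lmax * Lmax \<le> 1 * Lmax" using gs Lmu by (simp add: power2_eq_square mult.assoc)
      then have a: "30 * \<gamma> * real n * Lmax \<le> 1" using L0 by (simp add: mult_le_cancel_right)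
      have "\<gamma> * real n * \<mu> \<le> \<gamma> * real n * Lmax" using Lmu g0 nr by (intro mult_left_mono) auto
      then show ?thesis using a by linarith
    qed
    have D0: "D \<ge> 0" using g0 mu_pos S0 by (simp add: D_def)
    have "r k \<le> (1 - \<gamma>*real n*\<mu>/2)^k * r 0 + D / (1 - (1 - \<gamma>*real n*\<mu>/2))"
    proof (rule iterate_bound[of r "1 - \<gamma>*real n*\<mu>/2" D k])
      show "\<And>k. r (Suc k) \<le> (1 - \<gamma>*real n*\<mu>/2) * r k + D" by (rule rec)
      show "0 \<le> 1 - \<gamma>*real n*\<mu>/2" using gnm by linarith
      show "1 - \<gamma>*real n*\<mu>/2 < 1" using pos by linarith
      show "0 \<le> D" by (rule D0)
    qed
    also have "D / (1 - (1 - \<gamma>*real n*\<mu>/2)) = 108 * \<gamma>\<^sup>2 * real n * Lmax\<^sup>2 * S / \<mu>\<^sup>2"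
    proof -
      have "1 - (1 - \<gamma>*real n*\<mu>/2) = \<gamma>*real n*\<mu>/2" by simp
      moreover have "\<gamma> \<noteq> 0" "real n \<noteq> 0" "\<mu> \<noteq> 0" using g0 nr mu_pos by auto
      ultimately show ?thesis by (simp add: D_def field_simps power2_eq_square power3_eq_cube)
    qed
    finally show ?thesis unfolding r_def by (simp add: ieg_def)
  qed
  have sq3: "sqrt (10 * (real n)\<^sup>2 + c * real n + 29) \<ge> 3 * real n" if "c \<ge> 0" for c
  proof -
    have "(3 * real n)\<^sup>2 \<le> 10 * (real n)\<^sup>2 + c * real n + 29" using that nr
      by (simp add: power2_eq_square)
    then have "sqrt ((3 * real n)\<^sup>2) \<le> sqrt (10 * (real n)\<^sup>2 + c * real n + 29)"
      by (rule real_sqrt_le_mono)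
    moreover have "sqrt ((3 * real n)\<^sup>2) = 3 * real n" by (rule real_sqrt_unique) auto
    ultimately show ?thesis by linarith
  qed
  have stepc: "30 * \<gamma> * real n * Lmax\<^sup>2 \<le> \<mu>"
    if "\<gamma> > 0" "\<gamma> \<le> \<mu> / (10 * Lmax\<^sup>2 * sqrt (10 * (real n)\<^sup>2 + c * real n + 29))" "c \<ge> 0" for \<gamma> c
  proof -
    define q where "q = sqrt (10 * (real n)\<^sup>2 + c * real n + 29)"
    have q3: "q \<ge> 3 * real n" using sq3[OF that(3)] by (simp add: q_def)
    have qp: "10 * Lmax\<^sup>2 * q > 0" using q3 nr L0 by simp
    have "\<gamma> * (10 * Lmax\<^sup>2 * q) \<le> \<mu>" using that(2) qp by (simp add: q_def pos_le_divide_eq)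
    moreover have "30 * \<gamma> * real n * Lmax\<^sup>2 \<le> \<gamma> * (10 * Lmax\<^sup>2 * q)"
    proof -
      have "(\<gamma> * 10 * Lmax\<^sup>2) * (3 * real n) \<le> (\<gamma> * 10 * Lmax\<^sup>2) * q"
        using q3 that(1) by (intro mult_left_mono) auto
      then show ?thesis by (simp add: algebra_simps)
    qed
    ultimately show ?thesis by linarith
  qed
  have gnmG: "\<gamma>*real n*\<mu> \<le> 1" if gs: "30 * \<gamma> * real n * Lmax\<^sup>2 \<le> \<mu>" and g0: "\<gamma> > 0" for \<gamma>
  proof -
    have "30 * \<gamma> * real n * Lmax * Lmax \<le> 1 * Lmax" using gs Lmu by (simp add: power2_eq_square mult.assoc)
    then have a: "30 * \<gamma> * real n * Lmax \<le> 1" using L0 by (simp add: mult_le_cancel_right)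
    have "\<gamma> * real n * \<mu> \<le> \<gamma> * real n * Lmax" using Lmu g0 nr by (intro mult_left_mono) auto
    then show ?thesis using a by linarith
  qed
  have part1: "\<forall>\<gamma>1 \<gamma>2. \<gamma>1 > 0 \<and> \<gamma>2 = 2 * \<gamma>1 \<and>
         \<gamma>1 \<le> \<mu> / (10 * Lmax\<^sup>2 * sqrt (10 * (real n)\<^sup>2 + real n + 29)) \<longrightarrow>
       (\<forall>k. (norm (ieg n F \<gamma>1 \<gamma>2 z0 k - zs))\<^sup>2 \<le>
              (1 - \<gamma>1 * real n * \<mu> / 4) ^ k * (norm (z0 - zs))\<^sup>2
              + 48 * Lmax\<^sup>2 / \<mu>\<^sup>2 * (6 * real n * (real n - 1) * \<gamma>1\<^sup>2 + \<gamma>2\<^sup>2) * \<sigma>2)"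
  proof (intro allI impI)
    fix \<gamma>1 \<gamma>2 k
    assume h: "\<gamma>1 > 0 \<and> \<gamma>2 = 2 * \<gamma>1 \<and> \<gamma>1 \<le> \<mu> / (10 * Lmax\<^sup>2 * sqrt (10 * (real n)\<^sup>2 + real n + 29))"
    then have g0: "\<gamma>1 > 0" and g2: "\<gamma>2 = 2 * \<gamma>1" by auto
    have gs: "30 * \<gamma>1 * real n * Lmax\<^sup>2 \<le> \<mu>"
      using stepc[OF g0, of 1] h by simp
    have a1: "\<gamma>1*real n*\<mu> \<le> 1" by (rule gnmG[OF gs g0])
    have p: "(1 - \<gamma>1*real n*\<mu>/2)^k \<le> (1 - \<gamma>1 * real n * \<mu> / 4) ^ k"
      using a1 g0 mu_pos nr by (intro power_mono) (auto simp: field_simps)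
    have n6: "108 * (real n)\<^sup>2 \<le> 48 * (6 * real n * (real n - 1) + 4)"
    proof -
      have "0 \<le> (real n - 1) * (real n - 2)" using nr by simp
      then have m: "real n * real n \<ge> 3*real n - 2" by (simp add: algebra_simps)
      have e1: "108*(real n)\<^sup>2 = 108*(real n * real n)" by (simp add: power2_eq_square)
      have e2: "48 * (6 * real n * (real n - 1) + 4) = 288*(real n*real n) - 288*real n + 192"
        by (simp add: algebra_simps)
      show ?thesis unfolding e1 e2 using m nr by linarith
    qed
    have noise: "108 * \<gamma>1\<^sup>2 * real n * Lmax\<^sup>2 * S / \<mu>\<^sup>2 \<le>
        48 * Lmax\<^sup>2 / \<mu>\<^sup>2 * (6 * real n * (real n - 1) * \<gamma>1\<^sup>2 + \<gamma>2\<^sup>2) * \<sigma>2"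
    proof -
      have "108 * \<gamma>1\<^sup>2 * real n * Lmax\<^sup>2 * S / \<mu>\<^sup>2 = (108 * (real n)\<^sup>2) * (\<gamma>1\<^sup>2 * Lmax\<^sup>2 * \<sigma>2 / \<mu>\<^sup>2)"
        by (simp add: Ssig power2_eq_square)
      also have "\<dots> \<le> (48 * (6 * real n * (real n - 1) + 4)) * (\<gamma>1\<^sup>2 * Lmax\<^sup>2 * \<sigma>2 / \<mu>\<^sup>2)"
        using n6 sig0 by (intro mult_right_mono) auto
      also have "\<dots> = 48 * Lmax\<^sup>2 / \<mu>\<^sup>2 * (6 * real n * (real n - 1) * \<gamma>1\<^sup>2 + \<gamma>2\<^sup>2) * \<sigma>2"
        by (simp add: g2 power2_eq_square algebra_simps)
      finally show ?thesis .
    qed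
    have r0: "(norm (z0 - zs))\<^sup>2 \<ge> 0" by simp
    show "(norm (ieg n F \<gamma>1 \<gamma>2 z0 k - zs))\<^sup>2 \<le>
              (1 - \<gamma>1 * real n * \<mu> / 4) ^ k * (norm (z0 - zs))\<^sup>2
              + 48 * Lmax\<^sup>2 / \<mu>\<^sup>2 * (6 * real n * (real n - 1) * \<gamma>1\<^sup>2 + \<gamma>2\<^sup>2) * \<sigma>2"
      using gen[OF g0 gs, of k] mult_right_mono[OF p r0] noise unfolding g2 by linarith
  qed
  have part2: "\<exists>C (p::nat). \<forall>K::nat. K \<ge> 1 \<longrightarrow>
       (let \<gamma>1 = min (\<mu> / (10 * Lmax\<^sup>2 * sqrt (10 * (real n)\<^sup>2 + 2 * real n + 29)))
                       (4 * ln (sqrt (real n) * real K) / (\<mu> * real n * real K))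
        in (norm (ieg n F \<gamma>1 (2 * \<gamma>1) z0 K - zs))\<^sup>2
           \<le> C * (1 + ln (real K)) ^ p * (exp (- real K * \<mu>\<^sup>2 / Lmax\<^sup>2) + 1 / (real K)\<^sup>2))"
  proof -
    define a0 where "a0 = \<mu> / (10 * Lmax\<^sup>2 * sqrt (10 * (real n)\<^sup>2 + 2 * real n + 29))"
    define c where "c = a0 * real n * \<mu> / 2"
    define r0 where "r0 = (norm (z0 - zs))\<^sup>2"
    define Cn where "Cn = 108 * real n * Lmax\<^sup>2 * S / \<mu>\<^sup>2 * (16 * (1 + ln (sqrt (real n)))\<^sup>2 / (\<mu>\<^sup>2 * (real n)\<^sup>2))"
    define C where "C = (1 + 4 / c\<^sup>2) * r0 + Cn"
    have s3: "sqrt (10 * (real n)\<^sup>2 + 2 * real n + 29) \<ge> 3 * real n" using sq3[of 2] by simp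
    have sp: "sqrt (10 * (real n)\<^sup>2 + 2 * real n + 29) > 0" using s3 nr by linarith
    have a0pos: "a0 > 0" unfolding a0_def using sp mu_pos L0 by (intro divide_pos_pos mult_pos_pos) auto
    have cpos: "c > 0" unfolding c_def using a0pos nr mu_pos by simp
    have r00: "r0 \<ge> 0" by (simp add: r0_def)
    have lnn: "ln (sqrt (real n)) \<ge> 0" using nr by simp
    have Cn0: "Cn \<ge> 0" unfolding Cn_def using S0 by simp
    have C0: "C \<ge> 0" unfolding C_def using r00 Cn0 by simp
    have main: "(norm (ieg n F \<gamma> (2 * \<gamma>) z0 K - zs))\<^sup>2
           \<le> C * (1 + ln (real K)) ^ 2 * (exp (- real K * \<mu>\<^sup>2 / Lmax\<^sup>2) + 1 / (real K)\<^sup>2)"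
      if K1: "K \<ge> 1" and gdef: "\<gamma> = min a0 (4 * ln (sqrt (real n) * real K) / (\<mu> * real n * real K))" for K \<gamma>
    proof -
      define y where "y = sqrt (real n) * real K"
      define bK where "bK = 4 * ln y / (\<mu> * real n * real K)"
      have Kr: "real K \<ge> 1" using K1 by simp
      have sn: "sqrt (real n) > 1" using nr by simp
      have y1: "y > 1"
      proof -
        have "sqrt (real n) * 1 \<le> sqrt (real n) * real K" using Kr sn by (intro mult_left_mono) auto
        then have "sqrt (real n) \<le> y" by (simp add: y_def)
        then show ?thesis using sn by linarith
      qed
      have lny: "ln y > 0" using y1 by simp
      have bKpos: "bK > 0" unfolding bK_def using lny mu_pos nr Kr by simp
      have g: "\<gamma> = min a0 bK" using gdef by (simp add: bK_def y_def)
      have g0: "\<gamma> > 0" using g a0pos bKpos by simp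
      have ga: "\<gamma> \<le> a0" and gb: "\<gamma> \<le> bK" using g by auto
      have gs: "30 * \<gamma> * real n * Lmax\<^sup>2 \<le> \<mu>"
        using stepc[OF g0, of 2] ga unfolding a0_def by simp
      have gn1: "\<gamma>*real n*\<mu> \<le> 1" by (rule gnmG[OF gs g0])
      define x where "x = \<gamma>*real n*\<mu>/2"
      have x0: "x > 0" using g0 nr mu_pos by (simp add: x_def)
      have G: "(norm (ieg n F \<gamma> (2*\<gamma>) z0 K - zs))\<^sup>2 \<le> (1 - x)^K * r0
          + 108 * \<gamma>\<^sup>2 * real n * Lmax\<^sup>2 * S / \<mu>\<^sup>2"
        using gen[OF g0 gs, of K] by (simp add: x_def r0_def)
      define u where "u = 1 / (real K)\<^sup>2"
      have u0: "u \<ge> 0" by (simp add: u_def)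
      have A: "(1 - x)^K \<le> exp (real K * - x)"
      proof -
        have "1 - x \<le> exp (- x)" using exp_ge_add_one_self[of "- x"] by simp
        then have "(1 - x)^K \<le> (exp (- x))^K" using gn1 by (intro power_mono) (auto simp: x_def)
        moreover have "(exp (- x))^K = exp (real K * - x)" by (rule exp_of_nat_mult[symmetric])
        ultimately show ?thesis by simp
      qed
      have B: "exp (real K * - x) \<le> (1 + 4 / c\<^sup>2) * u"
      proof (cases "a0 \<le> bK")
        case True
        then have "\<gamma> = a0" using g by simp
        then have xc: "x = c" by (simp add: x_def c_def)
        define t where "t = c * real K / 2"
        have t0: "t > 0" using cpos Kr by (simp add: t_def)
        have et: "exp t \<ge> t" using exp_ge_add_one_self[of t] by linarith
        have "exp (c * real K) = exp t * exp t" by (simp add: t_def flip: exp_add)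
        also have "\<dots> \<ge> t * t" using et t0 by (intro mult_mono) auto
        finally have big: "exp (c * real K) \<ge> t * t" .
        have "exp (real K * - x) = 1 / exp (c * real K)" using xc by (simp add: exp_minus field_simps)
        also have "\<dots> \<le> 1 / (t * t)" using big t0 by (intro divide_left_mono) auto
        also have "\<dots> = (4 / c\<^sup>2) * u" using cpos Kr by (simp add: t_def u_def field_simps power2_eq_square)
        also have "\<dots> \<le> (1 + 4 / c\<^sup>2) * u" using u0 by (intro mult_right_mono) auto
        finally show ?thesis .
      next
        case False
        then have "\<gamma> = bK" using g by simp
        then have "real K * - x = - (2 * ln y)" unfolding x_def bK_def using mu_pos nr Kr
          by (simp add: field_simps)
        then have "exp (real K * - x) = 1 / exp (ln y + ln y)" by (simp add: exp_minus field_simps)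
        also have "exp (ln y + ln y) = y * y" using y1 by (simp only: exp_add exp_ln)
        also have "y * y = real n * (real K)\<^sup>2" using nr by (simp add: y_def power2_eq_square)
        also have "1 / (real n * (real K)\<^sup>2) \<le> 1 / (1 * (real K)\<^sup>2)" using nr Kr
          by (intro divide_left_mono mult_right_mono) auto
        also have "\<dots> \<le> (1 + 4 / c\<^sup>2) * u"
        proof -
          have "1 * u \<le> (1 + 4 / c\<^sup>2) * u" using u0 by (intro mult_right_mono) auto
          then show ?thesis by (simp add: u_def)
        qed
        finally show ?thesis .
      qed
      define l2 where "l2 = (1 + ln (real K))\<^sup>2"
      have lnK: "ln (real K) \<ge> 0" using Kr by simp
      have l21: "l2 \<ge> 1" unfolding l2_def using mult_mono[of 1 "1 + ln (real K)" 1 "1 + ln (real K)"] lnK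
        by (simp add: power2_eq_square)
      have Cnoise: "108 * \<gamma>\<^sup>2 * real n * Lmax\<^sup>2 * S / \<mu>\<^sup>2 \<le> Cn * l2 * u"
      proof -
        have lny_le: "ln y \<le> (1 + ln (sqrt (real n))) * (1 + ln (real K))"
        proof -
          have "ln y = ln (sqrt (real n)) + ln (real K)" using nr Kr by (simp add: y_def ln_mult)
          moreover have "0 \<le> ln (sqrt (real n)) * ln (real K)" using lnn lnK by simp
          ultimately show ?thesis by (simp add: algebra_simps)
        qed
        have "(ln y)\<^sup>2 \<le> ((1 + ln (sqrt (real n))) * (1 + ln (real K)))\<^sup>2"
          using lny lny_le by (intro power_mono) auto
        then have ly2: "(ln y)\<^sup>2 \<le> (1 + ln (sqrt (real n)))\<^sup>2 * l2" by (simp add: l2_def power_mult_distrib)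
        have "\<gamma>\<^sup>2 \<le> bK\<^sup>2" using g0 gb by (intro power_mono) auto
        also have "bK\<^sup>2 = 16 * (ln y)\<^sup>2 / (\<mu>\<^sup>2 * (real n)\<^sup>2) * u"
          unfolding bK_def u_def by (simp add: power_divide power_mult_distrib)
        also have "\<dots> \<le> 16 * ((1 + ln (sqrt (real n)))\<^sup>2 * l2) / (\<mu>\<^sup>2 * (real n)\<^sup>2) * u"
          using ly2 u0 by (intro mult_right_mono divide_right_mono mult_left_mono) auto
        finally have g2: "\<gamma>\<^sup>2 \<le> 16 * ((1 + ln (sqrt (real n)))\<^sup>2 * l2) / (\<mu>\<^sup>2 * (real n)\<^sup>2) * u" .
        have k0: "108 * real n * Lmax\<^sup>2 * S / \<mu>\<^sup>2 \<ge> 0" using S0 by simp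
        have "108 * \<gamma>\<^sup>2 * real n * Lmax\<^sup>2 * S / \<mu>\<^sup>2 = (108 * real n * Lmax\<^sup>2 * S / \<mu>\<^sup>2) * \<gamma>\<^sup>2"
          by simp
        also have "\<dots> \<le> (108 * real n * Lmax\<^sup>2 * S / \<mu>\<^sup>2) * (16 * ((1 + ln (sqrt (real n)))\<^sup>2 * l2) / (\<mu>\<^sup>2 * (real n)\<^sup>2) * u)"
          using g2 k0 by (intro mult_left_mono) auto
        also have "\<dots> = Cn * l2 * u" by (simp add: Cn_def)
        finally show ?thesis .
      qed
      have "(norm (ieg n F \<gamma> (2*\<gamma>) z0 K - zs))\<^sup>2 \<le> ((1 + 4 / c\<^sup>2) * u) * r0 + Cn * l2 * u"
      proof -
        have "(1 - x)^K * r0 \<le> ((1 + 4 / c\<^sup>2) * u) * r0" using A B r00 by (intro mult_right_mono) auto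
        then show ?thesis using G Cnoise by linarith
      qed
      also have "((1 + 4 / c\<^sup>2) * u) * r0 \<le> ((1 + 4 / c\<^sup>2) * u * r0) * l2"
      proof -
        have "0 \<le> (1 + 4 / c\<^sup>2) * u * r0" using u0 r00 by simp
        then show ?thesis using l21 by (metis mult.right_neutral mult_left_mono)
      qed
      also have "((1 + 4 / c\<^sup>2) * u * r0) * l2 + Cn * l2 * u = C * l2 * u" by (simp add: C_def algebra_simps)
      also have "C * l2 * u \<le> C * l2 * (exp (- real K * \<mu>\<^sup>2 / Lmax\<^sup>2) + u)"
        using C0 l21 by (intro mult_left_mono) auto
      finally show ?thesis by (simp add: l2_def u_def)
    qed
    show ?thesis
      by (rule exI[of _ C], rule exI[of _ 2]) (use main in \<open>auto simp: Let_def a0_def\<close>)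
  qed
  show ?thesis by (rule conjI[OF part1 part2])
qed

end
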